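(* Let $\alpha,\beta$ be rationals in $(0,1)$, let $\mathsf{S}_1,\mathsf{S}_2,\ldots$ be positive rationals, and define $\mathsf{srtt}_1=\mathsf{S}_1$, $\mathsf{srtt}_j=(1-\alpha)\mathsf{srtt}_{j-1}+\alpha\mathsf{S}_j$ for $j>1$, and $\mathsf{rttvar}_1=\mathsf{S}_1/2$, $\mathsf{rttvar}_j=(1-\beta)\mathsf{rttvar}_{j-1}+\beta|\mathsf{srtt}_{j-1}-\mathsf{S}_j|$ for $j>1$. Let $c,r>0$ be rationals and $i\ge 2$, and suppose $\mathsf{S}_j\in[c-r,c+r]$ for all $j\ge i$. Then there is a sequence $(U_n)_{n\ge 0}$ with $\mathsf{rttvar}_{i+n}\le U_n$ for all $n$ and $\lim_{n\to\infty}U_n=2r$. *)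

theory Defs
  imports Complex_Main
begin

text \<open>Sequences are indexed from 1; the value at index 0 is a junk value.\<close>

fun srtt :: "rat \<Rightarrow> (nat \<Rightarrow> rat) \<Rightarrow> nat \<Rightarrow> rat" where
  "srtt a S 0 = S 1"
| "srtt a S (Suc 0) = S 1"
| "srtt a S (Suc (Suc k)) = (1 - a) * srtt a S (Suc k) + a * S (Suc (Suc k))"

fun rttvar :: "rat \<Rightarrow> rat \<Rightarrow> (nat \<Rightarrow> rat) \<Rightarrow> nat \<Rightarrow> rat" where
  "rttvar a b S 0 = S 1 / 2"
| "rttvar a b S (Suc 0) = S 1 / 2"
| "rttvar a b S (Suc (Suc k)) =
     (1 - b) * rttvar a b S (Suc k) + b * \<bar>srtt a S (Suc k) - S (Suc (Suc k))\<bar>"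

end

theory Submission
  imports Defs
begin

lemma srtt_step: "m \<ge> 1 \<Longrightarrow> srtt a S (Suc m) = (1 - a) * srtt a S m + a * S (Suc m)"
  by (cases m) auto

lemma rttvar_step: "m \<ge> 1 \<Longrightarrow> rttvar a b S (Suc m) =
   (1 - b) * rttvar a b S m + b * \<bar>srtt a S m - S (Suc m)\<bar>"
  by (cases m) auto

theorem theorem4:
  fixes \<alpha> \<beta> c r :: rat and S :: "nat \<Rightarrow> rat" and i :: nat
  assumes "0 < \<alpha>" "\<alpha> < 1" "0 < \<beta>" "\<beta> < 1"
    and "\<forall>j\<ge>1. 0 < S j"
    and "0 < c" "0 < r" "i \<ge> 2"
    and "\<forall>j\<ge>i. c - r \<le> S j \<and> S j \<le> c + r"
  shows "\<exists>U :: nat \<Rightarrow> real.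
           (\<forall>n. real_of_rat (rttvar \<alpha> \<beta> S (i + n)) \<le> U n)
         \<and> U \<longlonglongrightarrow> 2 * real_of_rat r"
proof -
  define D where "D = \<bar>srtt \<alpha> S (i - 1) - c\<bar>"
  define q where "q = max (1 - \<alpha>) (1 - \<beta>)"
  define A where "A = \<bar>rttvar \<alpha> \<beta> S i - 2 * r\<bar>"
  have q0: "0 \<le> q" "q < 1" using assms by (auto simp: q_def)
  have D0: "0 \<le> D" by (simp add: D_def)
  have Sb: "\<bar>S (i + n) - c\<bar> \<le> r" for n using assms(9)[rule_format, of "i+n"] by auto
  have e: "\<bar>srtt \<alpha> S (i - 1 + n) - c\<bar> \<le> r + (1 - \<alpha>) ^ n * D" for n
  proof (induction n)
    case 0 then show ?case using assms by (simp add: D_def)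
  next
    case (Suc n)
    have eq: "srtt \<alpha> S (i - 1 + Suc n) - c
       = (1 - \<alpha>) * (srtt \<alpha> S (i - 1 + n) - c) + \<alpha> * (S (i + n) - c)"
      using srtt_step[of "i - 1 + n" \<alpha> S] assms(8)
      by (simp add: algebra_simps Suc_diff_le)
    have "\<bar>(1 - \<alpha>) * (srtt \<alpha> S (i - 1 + n) - c)\<bar> \<le> (1 - \<alpha>) * (r + (1 - \<alpha>) ^ n * D)"
      using Suc assms(2) by (simp add: abs_mult mult_left_mono)
    moreover have "\<bar>\<alpha> * (S (i + n) - c)\<bar> \<le> \<alpha> * r"
      using Sb[of n] assms(1) by (simp add: abs_mult mult_left_mono)
    ultimately have "\<bar>srtt \<alpha> S (i - 1 + Suc n) - c\<bar> \<le> (1 - \<alpha>) * (r + (1 - \<alpha>) ^ n * D) + \<alpha> * r"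
      unfolding eq by (meson abs_triangle_ineq add_mono order_trans)
    then show ?case by (simp add: algebra_simps)
  qed
  have pw: "(1 - \<alpha>) ^ n \<le> q ^ n" for n
    using assms by (intro power_mono) (auto simp: q_def)
  have v: "rttvar \<alpha> \<beta> S (i + n) \<le> 2 * r + (A + D * of_nat n) * q ^ n" for n
  proof (induction n)
    case 0 then show ?case by (simp add: A_def)
  next
    case (Suc n)
    have eq: "rttvar \<alpha> \<beta> S (i + Suc n) = (1 - \<beta>) * rttvar \<alpha> \<beta> S (i + n)
        + \<beta> * \<bar>srtt \<alpha> S (i + n) - S (i + Suc n)\<bar>"
      using rttvar_step[of "i + n" \<alpha> \<beta> S] assms(8) by simp
    have i1: "i - 1 + Suc n = i + n" using assms(8) by simp
    have "\<bar>srtt \<alpha> S (i + n) - S (i + Suc n)\<bar> \<le> \<bar>srtt \<alpha> S (i + n) - c\<bar> + \<bar>S (i + Suc n) - c\<bar>"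
      by linarith
    also have "\<dots> \<le> (r + (1 - \<alpha>) ^ Suc n * D) + r"
      using e[of "Suc n"] Sb[of "Suc n"] unfolding i1 by simp
    also have "\<dots> \<le> 2 * r + q ^ Suc n * D"
      using pw[of "Suc n"] D0 by (simp add: mult_right_mono)
    finally have t2: "\<beta> * \<bar>srtt \<alpha> S (i + n) - S (i + Suc n)\<bar> \<le> \<beta> * (2 * r + q ^ Suc n * D)"
      using assms(3) by (simp add: mult_left_mono)
    have AD: "0 \<le> (A + D * of_nat n) * q ^ n" using D0 q0 by (simp add: A_def)
    have t1: "(1 - \<beta>) * rttvar \<alpha> \<beta> S (i + n) \<le> (1 - \<beta>) * (2 * r + (A + D * of_nat n) * q ^ n)"
      using Suc assms(4) by (simp add: mult_left_mono)
    have t3: "(1 - \<beta>) * ((A + D * of_nat n) * q ^ n) \<le> q * ((A + D * of_nat n) * q ^ n)"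
      using AD by (intro mult_right_mono) (auto simp: q_def)
    have t4: "\<beta> * (q ^ Suc n * D) \<le> q ^ Suc n * D"
      using assms(3,4) D0 q0 by (intro mult_left_le_one_le) auto
    have "rttvar \<alpha> \<beta> S (i + Suc n) \<le> (1 - \<beta>) * (2 * r + (A + D * of_nat n) * q ^ n) + \<beta> * (2 * r + q ^ Suc n * D)"
      unfolding eq using t1 t2 by linarith
    also have "\<dots> = 2 * r + (1 - \<beta>) * ((A + D * of_nat n) * q ^ n) + \<beta> * (q ^ Suc n * D)"
      by (simp add: algebra_simps)
    also have "\<dots> \<le> 2 * r + q * ((A + D * of_nat n) * q ^ n) + q ^ Suc n * D"
      using t3 t4 by linarith
    also have "\<dots> = 2 * r + (A + D * of_nat (Suc n)) * q ^ Suc n"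
      by (simp add: algebra_simps)
    finally show ?case .
  qed
  define U where "U n = 2 * real_of_rat r + real_of_rat A * real_of_rat q ^ n
      + real_of_rat D * (real n * real_of_rat q ^ n)" for n
  have "real_of_rat (rttvar \<alpha> \<beta> S (i + n)) \<le> U n" for n
  proof -
    have "real_of_rat (rttvar \<alpha> \<beta> S (i + n)) \<le> real_of_rat (2 * r + (A + D * of_nat n) * q ^ n)"
      using v[of n] of_rat_less_eq by blast
    also have "\<dots> = U n"
      by (simp add: U_def of_rat_add of_rat_mult of_rat_power algebra_simps)
    finally show ?thesis .
  qed
  moreover have "U \<longlonglongrightarrow> 2 * real_of_rat r + real_of_rat A * 0 + real_of_rat D * 0"
  proof -
    have nq: "norm (real_of_rat q) < 1" using q0
      by (metis abs_of_nonneg of_rat_less_1_iff of_rat_less_eq of_rat_0 real_norm_def)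
    show ?thesis unfolding U_def
      by (intro tendsto_intros LIMSEQ_power_zero powser_times_n_limit_0 nq)
  qed
  ultimately show ?thesis by auto
qed

end
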